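(* For any continuous function $f:\mathrm{SO}(3)\to\mathbb{R}^3$, there exists a rotation $R\in\mathrm{SO}(3)$ such that $d(R,\mathbf{R}_{xyz}(f(R)))=\pi$.
   Context: Unit quaternions $w+x\mathbf{i}+y\mathbf{j}+z\mathbf{k}$ are identified with $(w,x,y,z)\in S^3$. $\mathbf{R}_Q:S^3\to\mathrm{SO}(3)$ is the standard conversion $$\mathbf{R}_Q(w,x,y,z)=\begin{bmatrix}1-2y^2-2z^2 & 2(xy-zw) & 2(xz+yw)\\ 2(xy+zw) & 1-2x^2-2z^2 & 2(yz-xw)\\ 2(xz-yw) & 2(yz+xw) & 1-2x^2-2y^2\end{bmatrix}.$$ Extrinsic $x$-$y$-$z$ Euler angles: $\mathbf{Q}_{xyz}(\alpha,\beta,\gamma)=(\cos\frac{\gamma}{2}+\mathbf{k}\sin\frac{\gamma}{2})(\cos\frac{\beta}{2}+\mathbf{j}\sin\frac{\beta}{2})(\cos\frac{\alpha}{2}+\mathbf{i}\sin\frac{\alpha}{2})$ (quaternion product) and $\mathbf{R}_{xyz}(\alpha,\beta,\gamma)=\mathbf{R}_Q(\mathbf{Q}_{xyz}(\alpha,\beta,\gamma))$. For $R_1,R_2\in\mathrm{SO}(3)$, $d(R_1,R_2)=\cos^{-1}\frac{\mathrm{tr}(R_2R_1^{-1})-1}{2}$ is the angle of the rotation $R_2R_1^{-1}$. *)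

theory Defs
  imports "HOL-Analysis.Analysis"
begin

text \<open>Quaternions w + x i + y j + z k represented as tuples (w,x,y,z).\<close>
type_synonym quat = "real \<times> real \<times> real \<times> real"

definition qmult :: "quat \<Rightarrow> quat \<Rightarrow> quat" where
  "qmult p q = (case p of (w1,x1,y1,z1) \<Rightarrow> case q of (w2,x2,y2,z2) \<Rightarrow>
     (w1*w2 - x1*x2 - y1*y2 - z1*z2,
      w1*x2 + x1*w2 + y1*z2 - z1*y2,
      w1*y2 - x1*z2 + y1*w2 + z1*x2,
      w1*z2 + x1*y2 - y1*x2 + z1*w2))"

definition SO3 :: "(real^3^3) set" where
  "SO3 = {R. orthogonal_matrix R \<and> det R = 1}"

definition R_Q :: "quat \<Rightarrow> real^3^3" where
  "R_Q q = (case q of (w,x,y,z) \<Rightarrow>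
     vector [vector [1 - 2*y^2 - 2*z^2, 2*(x*y - z*w), 2*(x*z + y*w)],
             vector [2*(x*y + z*w), 1 - 2*x^2 - 2*z^2, 2*(y*z - x*w)],
             vector [2*(x*z - y*w), 2*(y*z + x*w), 1 - 2*x^2 - 2*y^2]])"

definition Q_xyz :: "real \<Rightarrow> real \<Rightarrow> real \<Rightarrow> quat" where
  "Q_xyz \<alpha> \<beta> \<gamma> =
     qmult (qmult (cos (\<gamma>/2), 0, 0, sin (\<gamma>/2)) (cos (\<beta>/2), 0, sin (\<beta>/2), 0))
           (cos (\<alpha>/2), sin (\<alpha>/2), 0, 0)"

definition R_xyz :: "real \<Rightarrow> real \<Rightarrow> real \<Rightarrow> real^3^3" where
  "R_xyz \<alpha> \<beta> \<gamma> = R_Q (Q_xyz \<alpha> \<beta> \<gamma>)"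

definition rot_dist :: "real^3^3 \<Rightarrow> real^3^3 \<Rightarrow> real" where
  "rot_dist R1 R2 = arccos ((trace (R2 ** matrix_inv R1) - 1) / 2)"

end

theory Submission
  imports Defs
begin

lemma orth_inv:
  fixes A :: "real^3^3"
  assumes "orthogonal_matrix A"
  shows "matrix_inv A = transpose A"
proof -
  have ex: "\<exists>A'. A ** A' = mat 1 \<and> A' ** A = mat 1"
    using assms unfolding orthogonal_matrix_def by blast
  define B where "B = matrix_inv A"
  have B: "A ** B = mat 1 \<and> B ** A = mat 1"
    unfolding B_def matrix_inv_def by (rule someI_ex[OF ex])
  have "B = (transpose A ** A) ** B"
    using assms unfolding orthogonal_matrix_def by simp
  also have "\<dots> = transpose A" using B by (simp flip: matrix_mul_assoc)
  finally show ?thesis unfolding B_def .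
qed

definition Rt :: "real \<Rightarrow> real^3^3" where
  "Rt t = R_Q (cos t, sin t, 0, 0)"

lemma Rt_alt:
  "Rt t = vector [vector [1,0,0], vector [0,0,0], vector [0,0,0]]
      + cos (2*t) *\<^sub>R vector [vector [0,0,0], vector [0,1,0], vector [0,0,1]]
      + sin (2*t) *\<^sub>R vector [vector [0,0,0], vector [0,0,-1], vector [0,1,0]]"
  unfolding Rt_def R_Q_def
  apply (simp add: vec_eq_iff forall_3 cos_double sin_double power2_eq_square)
  using sin_cos_squared_add3[of t] by linarith

lemma Rt_cont: "continuous_on UNIV Rt"
  unfolding Rt_alt by (intro continuous_intros)

lemma Rt_SO3: "Rt t \<in> SO3"
proof -
  have c: "(cos t)^2 + (sin t)^2 = 1" by simp
  show ?thesis
  unfolding SO3_def orthogonal_matrix Rt_def R_Q_def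
  apply (simp add: vec_eq_iff forall_3 det_3 matrix_matrix_mult_def transpose_def sum_3 mat_def)
  using c by algebra
qed

lemma Rt_pi: "Rt pi = Rt 0"
  unfolding Rt_alt by simp

lemma qmult_norm:
  "(case qmult (a,b,c,d) (e,f,g,h) of (w,x,y,z) \<Rightarrow> w^2+x^2+y^2+z^2)
   = (a^2+b^2+c^2+d^2) * (e^2+f^2+g^2+h^2)"
  unfolding qmult_def by simp algebra

lemma Q_unit:
  "(case Q_xyz a b c of (w,x,y,z) \<Rightarrow> w^2+x^2+y^2+z^2) = 1"
proof -
  obtain w x y z where q: "qmult (cos (c/2), 0, 0, sin (c/2)) (cos (b/2), 0, sin (b/2), 0) = (w,x,y,z)"
    by (metis prod_cases4)
  have "w^2+x^2+y^2+z^2 = 1" using qmult_norm[of "cos (c/2)" 0 0 "sin (c/2)" "cos (b/2)" 0 "sin (b/2)" 0] q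
    by simp
  then show ?thesis unfolding Q_xyz_def q using qmult_norm[of w x y z "cos (a/2)" "sin (a/2)" 0 0]
    by simp
qed

lemma trace_key:
  assumes "w^2+x^2+y^2+z^2 = 1"
  shows "trace (R_Q (w,x,y,z) ** transpose (Rt t)) = 4 * (w * cos t + x * sin t)^2 - 1"
proof -
  have c: "(cos t)^2 + (sin t)^2 = 1" by simp
  show ?thesis
  unfolding Rt_def R_Q_def trace_def
  apply (simp add: matrix_matrix_mult_def transpose_def sum_3)
  using c assms by algebra
qed

theorem corollary2:
  fixes f :: "real^3^3 \<Rightarrow> real^3"
  assumes "continuous_on SO3 f"
  shows "\<exists>R\<in>SO3. rot_dist R (R_xyz (f R $ 1) (f R $ 2) (f R $ 3)) = pi"
proof -
  define g where "g t = f (Rt t)" for t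
  define p where "p t = Q_xyz (g t $ 1) (g t $ 2) (g t $ 3)" for t
  define \<phi> where "\<phi> t = fst (p t) * cos t + fst (snd (p t)) * sin t" for t
  have gc: "continuous_on UNIV g"
    unfolding g_def
    by (rule continuous_on_compose2[OF assms Rt_cont]) (auto simp: Rt_SO3)
  have "continuous_on UNIV \<phi>"
    unfolding \<phi>_def p_def Q_xyz_def qmult_def
    by (simp add: case_prod_beta) (intro continuous_intros gc; simp)
  then have phic: "continuous_on {0..pi} \<phi>" by (rule continuous_on_subset) auto
  have phipi: "\<phi> pi = - \<phi> 0" unfolding \<phi>_def g_def p_def Rt_pi by simp
  have "\<exists>t\<in>{0..pi}. \<phi> t = 0"
  proof (cases "\<phi> 0 \<le> 0")
    case True
    then show ?thesis using IVT'[of \<phi> 0 0 pi] phic phipi by auto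
  next
    case False
    then show ?thesis using IVT2'[of \<phi> pi 0 0] phic phipi by auto
  qed
  then obtain t where t: "\<phi> t = 0" by blast
  obtain w x y z where pt: "p t = (w,x,y,z)" by (metis prod_cases4)
  have u: "w^2+x^2+y^2+z^2 = 1" using Q_unit pt unfolding p_def by (metis case_prod_conv)
  have inv: "matrix_inv (Rt t) = transpose (Rt t)"
    using Rt_SO3[of t] unfolding SO3_def by (simp add: orth_inv)
  have "trace (R_Q (p t) ** matrix_inv (Rt t)) = -1"
    using trace_key[OF u, of t] t pt unfolding inv \<phi>_def by simp
  then have "rot_dist (Rt t) (R_xyz (f (Rt t) $ 1) (f (Rt t) $ 2) (f (Rt t) $ 3)) = pi"
    unfolding rot_dist_def R_xyz_def p_def g_def by simp
  then show ?thesis using Rt_SO3 by blast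
qed

end
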